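(* Let $w\in W^*(d,2m;\vec 0)$. Then $\Phi(\phi(w))$ and $w$ have the same sequence of positive steps if and only if $\Phi(\phi(w))=w$.
   Context: $n,r,d\ge1$, $m=rn$. $U=\{u_1\prec\cdots\prec u_n\}$, $V=\{v_1\prec\cdots\prec v_n\}$; $\overline U=U\times[r]$, $\overline V=V\times[r]$ ordered lexicographically (write $u^s$ for $(u,s)$). An $r$-configuration is a bijection between $\overline U$ and $\overline V$; a quasi configuration is a partial matching. Pairs $(\bar u,\bar v),(\bar u',\bar v')$ are noncrossing if ($\bar u\prec\bar u'$ and $\bar v\prec\bar v'$) or ($\bar u'\prec\bar u$ and $\bar v'\prec\bar v$). $W^*(d,2m;\vec0)$: walks $w=a_{u_1^1}\cdots a_{u_n^r}|b_{v_1^1}\cdots b_{v_n^r}$, $a_{\bar u},b_{\bar v}\in[d]$, in $\mathbb Z^d$ from the origin with steps $e_{a_{\bar u}}$ ($\bar u$ increasing) then $-e_{b_{\bar v}}$ ($\bar v$ increasing), ending at the origin; the positive steps are $a_{u_1^1}\cdots a_{u_n^r}$. For an $r$-configuration $F$: $a_{\bar u}$ is the maximum size of a set of pairwise noncrossing pairs of $F$ containing the pair $(\bar u,\bar v')\in F$, all of whose pairs $(x,y)$ satisfy $x\preceq\bar u$, $y\preceq\bar v'$; $b_{\bar v}$ symmetrically; $\Phi(F)=a_{u_1^1}\cdots a_{u_n^r}|b_{v_1^1}\cdots b_{v_n^r}$. $A_k(w)=\{\bar u:a_{\bar u}=k\}$, $B_k(w)=\{\bar v:b_{\bar v}=k\}$;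 connecting equal-size ordered sets $A,B$ in a crossing way: pair the $i$-th smallest of $A$ with the $i$-th largest of $B$; $\phi(w)$: for each $k$, if $|A_k(w)|\ge|B_k(w)|$ connect the $|B_k(w)|$ smallest elements of $A_k(w)$ with $B_k(w)$ in a crossing way, else connect $A_k(w)$ with the $|A_k(w)|$ largest elements of $B_k(w)$ in a crossing way. (For $w$ ending at the origin, $\phi(w)$ is an $r$-configuration, so $\Phi(\phi(w))$ is defined.) *)

theory Defs
  imports Main "HOL-Library.Product_Lexorder"
begin

(* Elements of \<overline>U (resp. \<overline>V) are pairs (i,s) standing for u_i^s (resp. v_i^s),
   with i \<in> {1..n}, s \<in> {1..r}; the order on nat \<times> nat is lexicographic
   (HOL-Library.Product_Lexorder). *)
definition Ubar :: "nat \<Rightarrow> nat \<Rightarrow> (nat \<times> nat) set" where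
  "Ubar n r = {1..n} \<times> {1..r}"

type_synonym elt = "nat \<times> nat"
type_synonym pair = "elt \<times> elt"

(* A walk a|b in W^*(d,2m;0): positive step labels a on Ubar, negative labels b on Vbar
   (Vbar = Ubar as index set). *)
definition walk_end :: "nat \<Rightarrow> nat \<Rightarrow> (elt \<Rightarrow> nat) \<Rightarrow> (elt \<Rightarrow> nat) \<Rightarrow> nat \<Rightarrow> int" where
  "walk_end n r a b k = int (card {u \<in> Ubar n r. a u = k}) - int (card {v \<in> Ubar n r. b v = k})"

definition in_W :: "nat \<Rightarrow> nat \<Rightarrow> nat \<Rightarrow> (elt \<Rightarrow> nat) \<Rightarrow> (elt \<Rightarrow> nat) \<Rightarrow> bool" where
  "in_W d n r a b \<longleftrightarrow>
     (\<forall>u \<in> Ubar n r. a u \<in> {1..d}) \<and> (\<forall>v \<in> Ubar n r. b v \<in> {1..d}) \<and>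
     (\<forall>k. walk_end n r a b k = 0)"

definition A_set :: "nat \<Rightarrow> nat \<Rightarrow> (elt \<Rightarrow> nat) \<Rightarrow> nat \<Rightarrow> elt set" where
  "A_set n r a k = {u \<in> Ubar n r. a u = k}"

definition B_set :: "nat \<Rightarrow> nat \<Rightarrow> (elt \<Rightarrow> nat) \<Rightarrow> nat \<Rightarrow> elt set" where
  "B_set n r b k = {v \<in> Ubar n r. b v = k}"

(* phi(w): for each k, with p = min |A_k| |B_k|, pair the i-th smallest of the first p
   elements of A_k with the i-th largest of the last p elements of B_k
   (this covers both cases |A_k| >= |B_k| and |A_k| < |B_k| of the definition). *)
definition phi :: "nat \<Rightarrow> nat \<Rightarrow> (elt \<Rightarrow> nat) \<Rightarrow> (elt \<Rightarrow> nat) \<Rightarrow> pair set" where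
  "phi n r a b = {(x, y). \<exists>k. x \<in> A_set n r a k \<and> y \<in> B_set n r b k \<and>
      (let p = min (card (A_set n r a k)) (card (B_set n r b k));
           i = card {x' \<in> A_set n r a k. x' < x};
           j = card {y' \<in> B_set n r b k. y < y'}
       in i < p \<and> j < p \<and> i = j)}"

definition noncrossing :: "pair \<Rightarrow> pair \<Rightarrow> bool" where
  "noncrossing p q \<longleftrightarrow>
     (fst p < fst q \<and> snd p < snd q) \<or> (fst q < fst p \<and> snd q < snd p)"

definition pw_noncrossing :: "pair set \<Rightarrow> bool" where
  "pw_noncrossing S \<longleftrightarrow> (\<forall>p \<in> S. \<forall>q \<in> S. p \<noteq> q \<longrightarrow> noncrossing p q)"

definition Phi_a :: "pair set \<Rightarrow> elt \<Rightarrow> nat" where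
  "Phi_a F u = Max {card S | S v'. (u, v') \<in> F \<and> S \<subseteq> F \<and> (u, v') \<in> S \<and> pw_noncrossing S \<and>
                      (\<forall>(x, y) \<in> S. x \<le> u \<and> y \<le> v')}"

definition Phi_b :: "pair set \<Rightarrow> elt \<Rightarrow> nat" where
  "Phi_b F v = Max {card S | S u'. (u', v) \<in> F \<and> S \<subseteq> F \<and> (u', v) \<in> S \<and> pw_noncrossing S \<and>
                      (\<forall>(x, y) \<in> S. x \<le> u' \<and> y \<le> v)}"

end

theory Submission
  imports Defs
begin

lemma rank_lt_inj:
  fixes A :: "'a::linorder set"
  assumes "finite A"
  shows "inj_on (\<lambda>x. card {x'\<in>A. x' < x}) A"
proof (rule inj_onI)
  fix x y assume x: "x \<in> A" and y: "y \<in> A" and e: "card {x'\<in>A. x' < x} = card {x'\<in>A. x' < y}"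
  show "x = y"
  proof (rule ccontr)
    assume "x \<noteq> y"
    then consider "x < y" | "y < x" by (auto simp add: neq_iff)
    then show False
    proof cases
      case 1
      have ss: "{x'\<in>A. x' < x} \<subset> {x'\<in>A. x' < y}" using 1 x by auto
      have "card {x'\<in>A. x' < x} < card {x'\<in>A. x' < y}"
        by (rule psubset_card_mono[OF _ ss]) (simp add: assms)
      then show False using e by simp
    next
      case 2
      have ss: "{x'\<in>A. x' < y} \<subset> {x'\<in>A. x' < x}" using 2 y by auto
      have "card {x'\<in>A. x' < y} < card {x'\<in>A. x' < x}"
        by (rule psubset_card_mono[OF _ ss]) (simp add: assms)
      then show False using e by simp
    qed
  qed
qed

lemma rank_gt_inj:
  fixes A :: "'a::linorder set"
  assumes "finite A"
  shows "inj_on (\<lambda>x. card {x'\<in>A. x < x'}) A"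
proof (rule inj_onI)
  fix x y assume x: "x \<in> A" and y: "y \<in> A" and e: "card {x'\<in>A. x < x'} = card {x'\<in>A. y < x'}"
  show "x = y"
  proof (rule ccontr)
    assume "x \<noteq> y"
    then consider "x < y" | "y < x" by (auto simp add: neq_iff)
    then show False
    proof cases
      case 1
      have ss: "{x'\<in>A. y < x'} \<subset> {x'\<in>A. x < x'}" using 1 y by auto
      have "card {x'\<in>A. y < x'} < card {x'\<in>A. x < x'}"
        by (rule psubset_card_mono[OF _ ss]) (simp add: assms)
      then show False using e by simp
    next
      case 2
      have ss: "{x'\<in>A. x < x'} \<subset> {x'\<in>A. y < x'}" using 2 x by auto
      have "card {x'\<in>A. x < x'} < card {x'\<in>A. y < x'}"
        by (rule psubset_card_mono[OF _ ss]) (simp add: assms)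
      then show False using e by simp
    qed
  qed
qed

lemma rank_lt_surj:
  fixes A :: "'a::linorder set"
  assumes "finite A" "i < card A"
  shows "\<exists>x\<in>A. card {x'\<in>A. x' < x} = i"
proof -
  let ?f = "\<lambda>x. card {x'\<in>A. x' < x}"
  have sub: "?f ` A \<subseteq> {..<card A}"
  proof
    fix j assume "j \<in> ?f ` A"
    then obtain x where x: "x \<in> A" "j = ?f x" by auto
    have ss: "{x'\<in>A. x' < x} \<subset> A" using x by auto
    then have "?f x < card A" by (rule psubset_card_mono[OF assms(1)])
    then show "j \<in> {..<card A}" using x by simp
  qed
  have "card (?f ` A) = card A" using card_image[OF rank_lt_inj[OF assms(1)]] .
  then have "?f ` A = {..<card A}" using card_subset_eq[OF finite_lessThan sub] by simp
  then have "i \<in> ?f ` A" using assms(2) by simp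
  then show ?thesis by blast
qed

lemma phi_Ubar:
  assumes "(x, y) \<in> phi n r a b"
  shows "x \<in> Ubar n r" "y \<in> Ubar n r" "a x = b y"
  using assms unfolding phi_def A_set_def B_set_def by auto

lemma phi_uniq_u:
  assumes "(x, y) \<in> phi n r a b" "(x', y) \<in> phi n r a b"
  shows "x = x'"
proof -
  from assms(1) obtain k where k: "x \<in> A_set n r a k" "y \<in> B_set n r b k"
    "card {x'' \<in> A_set n r a k. x'' < x} = card {y' \<in> B_set n r b k. y < y'}"
    unfolding phi_def Let_def by auto
  from assms(2) obtain k' where k': "x' \<in> A_set n r a k'" "y \<in> B_set n r b k'"
    "card {x'' \<in> A_set n r a k'. x'' < x'} = card {y' \<in> B_set n r b k'. y < y'}"
    unfolding phi_def Let_def by auto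
  have "k = k'" using k(2) k'(2) unfolding B_set_def by auto
  have fin: "finite (A_set n r a k)" unfolding A_set_def Ubar_def by auto
  show ?thesis using inj_onD[OF rank_lt_inj[OF fin]] k k' \<open>k = k'\<close> by auto
qed

lemma phi_uniq_v:
  assumes "(x, y) \<in> phi n r a b" "(x, y') \<in> phi n r a b"
  shows "y = y'"
proof -
  from assms(1) obtain k where k: "x \<in> A_set n r a k" "y \<in> B_set n r b k"
    "card {x'' \<in> A_set n r a k. x'' < x} = card {y'' \<in> B_set n r b k. y < y''}"
    unfolding phi_def Let_def by auto
  from assms(2) obtain k' where k': "x \<in> A_set n r a k'" "y' \<in> B_set n r b k'"
    "card {x'' \<in> A_set n r a k'. x'' < x} = card {y'' \<in> B_set n r b k'. y' < y''}"
    unfolding phi_def Let_def by auto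
  have "k = k'" using k(1) k'(1) unfolding A_set_def by auto
  have fin: "finite (B_set n r b k)" unfolding B_set_def Ubar_def by auto
  show ?thesis using inj_onD[OF rank_gt_inj[OF fin]] k k' \<open>k = k'\<close> by auto
qed

lemma phi_exists_u:
  assumes "in_W d n r a b" "v \<in> Ubar n r"
  shows "\<exists>u. (u, v) \<in> phi n r a b"
proof -
  let ?k = "b v"
  let ?A = "A_set n r a ?k" and ?B = "B_set n r b ?k"
  have cA: "card ?A = card ?B" using assms(1) unfolding in_W_def walk_end_def A_set_def B_set_def
    by (simp only: of_nat_eq_iff eq_iff_diff_eq_0[symmetric])
  have finA: "finite ?A" and finB: "finite ?B" unfolding A_set_def B_set_def Ubar_def by auto
  have vB: "v \<in> ?B" using assms(2) unfolding B_set_def by auto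
  let ?j = "card {y' \<in> ?B. v < y'}"
  have "{y' \<in> ?B. v < y'} \<subset> ?B" using vB by auto
  then have jlt: "?j < card ?B" using finB by (simp add: psubset_card_mono)
  have ex: "\<exists>x\<in>?A. card {x' \<in> ?A. x' < x} = ?j"
    by (rule rank_lt_surj[OF finA]) (simp only: cA jlt)
  then obtain u where u: "u \<in> ?A" "card {x' \<in> ?A. x' < u} = ?j"
    by blast
  have "(u, v) \<in> phi n r a b" unfolding phi_def Let_def mem_Collect_eq prod.case
    apply (rule exI[of _ "b v"])
    using u vB jlt cA by simp
  then show ?thesis by blast
qed

theorem lemma7:
  fixes n r d :: nat and a b :: "nat \<times> nat \<Rightarrow> nat"
  assumes "n \<ge> 1" and "r \<ge> 1" and "d \<ge> 1"
    and "in_W d n r a b"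
  shows "(\<forall>u \<in> Ubar n r. Phi_a (phi n r a b) u = a u) \<longleftrightarrow>
         ((\<forall>u \<in> Ubar n r. Phi_a (phi n r a b) u = a u) \<and>
          (\<forall>v \<in> Ubar n r. Phi_b (phi n r a b) v = b v))"
proof -
  have key: "Phi_b (phi n r a b) v = b v"
    if H: "\<forall>u \<in> Ubar n r. Phi_a (phi n r a b) u = a u" and v: "v \<in> Ubar n r" for v
  proof -
  let ?F = "phi n r a b"
  obtain u where uv: "(u, v) \<in> ?F" using phi_exists_u[OF assms(4) v] by blast
  have sets: "{card S | S v'. (u, v') \<in> ?F \<and> S \<subseteq> ?F \<and> (u, v') \<in> S \<and> pw_noncrossing S \<and>
                      (\<forall>(x, y) \<in> S. x \<le> u \<and> y \<le> v')}
    = {card S | S u'. (u', v) \<in> ?F \<and> S \<subseteq> ?F \<and> (u', v) \<in> S \<and> pw_noncrossing S \<and>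
                      (\<forall>(x, y) \<in> S. x \<le> u' \<and> y \<le> v)}"
  proof -
    have e1: "\<And>v'. (u, v') \<in> ?F \<longleftrightarrow> v' = v" using uv phi_uniq_v by metis
    have e2: "\<And>u'. (u', v) \<in> ?F \<longleftrightarrow> u' = u" using uv phi_uniq_u by metis
    show ?thesis unfolding e1 e2 by blast
  qed
  have "Phi_b ?F v = Phi_a ?F u" unfolding Phi_a_def Phi_b_def using sets by simp
  also have "\<dots> = a u" using H phi_Ubar(1)[OF uv] by auto
  also have "\<dots> = b v" using phi_Ubar(3)[OF uv] .
  finally show "Phi_b ?F v = b v" .
qed
  show ?thesis using key by blast
qed

end
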